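(* Let $\Delta$ be a simplicial polytopal fan in $\mathbb{R}^d$ with ray generators $\mathbf{v}_1,\ldots,\mathbf{v}_n$. Let $\mathbf{u}^{(1)},\mathbf{u}^{(2)},\ldots\in\mathbb{S}^{d-1}$ be a sequence of directions for which there exist $0\le t<1/2$, $\delta>0$ and $N\in\mathbb{N}$ such that \[ |\{\mathbf{u}^{(1)},\ldots,\mathbf{u}^{(m)}\}\cap C_t(i)|\ge m(2.5nt+\delta) \] for all $m\ge N$ and all $1\le i\le n$. Then, with $U=(\mathbf{u}^{(1)},\ldots,\mathbf{u}^{(m)})^\mathsf{T}$, \[ \lambda_1(A_U^\mathsf{T}A_U)\ge\frac{m\delta}{\max_{1\le i\le n}\|\mathbf{v}_i\|^2} \] for all $m\ge N$.
   Context: A fan is simplicial if every cone is generated by linearly independent vectors; polytopal if it is the normal fan of a polytope. For $\mathbf{u}\in\mathbb{R}^d$, with $\sigma$ the cone of $\Delta$ containing $\mathbf{u}$ in its relative interior and $\mathbf{u}=\sum_{k\in I_\sigma}\lambda_k\mathbf{v}_k$ over the generators of $\sigma$, set $[\mathbf{u}]_i=\lambda_i$ for $i\in I_\sigma$ and $0$ otherwise; $A_U$ is the $m\times n$ matrix with rows $[\mathbf{u}^{(i)}]^\mathsf{T}$. $W$ is the $n\times n$ diagonal matrix with diagonal entries $\|\mathbf{v}_1\|,\ldots,\|\mathbf{v}_n\|$, and $C_t(j)=\{\mathbf{x}\in\mathbb{R}^d\colon\|[\mathbf{x}]^\mathsf{T}W-\mathbf{e}_j\|_\infty\le t\}$.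 $\lambda_1(A)$ denotes the smallest eigenvalue of a symmetric matrix $A$. *)

theory Defs
  imports "HOL-Analysis.Analysis"
begin

definition pos_hull :: "'a::real_vector set \<Rightarrow> 'a set" where
  "pos_hull S = {(\<Sum>x\<in>S. c x *\<^sub>R x) | c. \<forall>x\<in>S. c x \<ge> 0}"

definition normal_cone :: "'a::real_inner set \<Rightarrow> 'a set \<Rightarrow> 'a set" where
  "normal_cone P F = {u. \<forall>x\<in>F. \<forall>y\<in>P. inner u y \<le> inner u x}"

definition normal_fan :: "'a::real_inner set \<Rightarrow> 'a set set" where
  "normal_fan P = {normal_cone P F | F. F face_of P \<and> F \<noteq> {}}"

definition polytopal_fan :: "'a::euclidean_space set set \<Rightarrow> bool" where
  "polytopal_fan \<Delta> \<longleftrightarrow> (\<exists>P. polytope P \<and> \<Delta> = normal_fan P)"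

definition simplicial_fan :: "'a::euclidean_space set set \<Rightarrow> bool" where
  "simplicial_fan \<Delta> \<longleftrightarrow>
     (\<forall>\<sigma>\<in>\<Delta>. \<exists>S. finite S \<and> independent S \<and> \<sigma> = pos_hull S)"

definition ray_generators :: "'a::euclidean_space set set \<Rightarrow> ('n \<Rightarrow> 'a) \<Rightarrow> bool" where
  "ray_generators \<Delta> v \<longleftrightarrow>
     (\<forall>i. v i \<noteq> 0 \<and> pos_hull {v i} \<in> \<Delta>) \<and>
     inj (\<lambda>i. pos_hull {v i}) \<and>
     (\<forall>\<sigma>\<in>\<Delta>. dim \<sigma> = 1 \<longrightarrow> (\<exists>i. \<sigma> = pos_hull {v i}))"

definition carrier_cone :: "'a::euclidean_space set set \<Rightarrow> 'a \<Rightarrow> 'a set" where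
  "carrier_cone \<Delta> u = (THE \<sigma>. \<sigma> \<in> \<Delta> \<and> u \<in> rel_interior \<sigma>)"

definition fan_coords ::
  "'a::euclidean_space set set \<Rightarrow> ('n::finite \<Rightarrow> 'a) \<Rightarrow> 'a \<Rightarrow> real^'n" where
  "fan_coords \<Delta> v u =
     (let \<sigma> = carrier_cone \<Delta> u in
      THE c. (\<forall>i. v i \<notin> \<sigma> \<longrightarrow> c $ i = 0) \<and>
             u = (\<Sum>i\<in>{i. v i \<in> \<sigma>}. (c $ i) *\<^sub>R v i))"

text \<open>A_U^T A_U for U = (u^(1),\<dots>,u^(m))^T, where A_U is the m\<times>n matrix with rows [u^(k)]^T:
  its (i,j) entry is \<Sum>_{k=1..m} [u^(k)]_i [u^(k)]_j.\<close>
definition AtA_U ::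
  "'a::euclidean_space set set \<Rightarrow> ('n::finite \<Rightarrow> 'a) \<Rightarrow> (nat \<Rightarrow> 'a) \<Rightarrow> nat \<Rightarrow> real^'n^'n" where
  "AtA_U \<Delta> v u m =
     (\<chi> i j. \<Sum>k\<in>{1..m}. (fan_coords \<Delta> v (u k)) $ i * (fan_coords \<Delta> v (u k)) $ j)"

definition C_set ::
  "'a::euclidean_space set set \<Rightarrow> ('n::finite \<Rightarrow> 'a) \<Rightarrow> real \<Rightarrow> 'n \<Rightarrow> 'a set" where
  "C_set \<Delta> v t j =
     {x. (MAX i\<in>UNIV. \<bar>(fan_coords \<Delta> v x) $ i * norm (v i) - (if i = j then 1 else 0)\<bar>) \<le> t}"

definition lambda_min :: "real^'n^'n \<Rightarrow> real" where
  "lambda_min M = Min {e. \<exists>x. x \<noteq> 0 \<and> M *v x = e *\<^sub>R x}"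

end

theory Submission
  imports Defs
begin
lemma quad_form:
  fixes c :: "nat \<Rightarrow> real^'n::finite" and K :: "nat set"
  assumes "finite K"
  shows "x \<bullet> ((\<chi> i j. \<Sum>k\<in>K. c k $ i * c k $ j) *v x) = (\<Sum>k\<in>K. (c k \<bullet> x)\<^sup>2)"
proof -
  have "x \<bullet> ((\<chi> i j. \<Sum>k\<in>K. c k $ i * c k $ j) *v x)
      = (\<Sum>i\<in>UNIV. x $ i * (\<Sum>j\<in>UNIV. (\<Sum>k\<in>K. c k $ i * c k $ j) * x $ j))"
    by (simp add: inner_vec_def matrix_vector_mult_def)
  also have "\<dots> = (\<Sum>k\<in>K. (\<Sum>i\<in>UNIV. c k $ i * x $ i) * (\<Sum>j\<in>UNIV. c k $ j * x $ j))"
    by (simp add: sum_distrib_left sum_distrib_right sum.swap[of _ K] mult_ac)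
  also have "\<dots> = (\<Sum>k\<in>K. (c k \<bullet> x)\<^sup>2)"
    by (simp add: inner_vec_def power2_eq_square)
  finally show ?thesis .
qed

lemma sym_mat:
  fixes M :: "real^'n::finite^'n"
  assumes "\<And>i j. M $ i $ j = M $ j $ i"
  shows "x \<bullet> (M *v y) = (M *v x) \<bullet> y"
proof -
  have "x \<bullet> (M *v y) = (\<Sum>i\<in>UNIV. \<Sum>j\<in>UNIV. x $ i * M $ i $ j * y $ j)"
    by (simp add: inner_vec_def matrix_vector_mult_def sum_distrib_left mult_ac)
  also have "\<dots> = (\<Sum>j\<in>UNIV. \<Sum>i\<in>UNIV. x $ i * M $ i $ j * y $ j)"
    by (rule sum.swap)
  also have "\<dots> = (\<Sum>j\<in>UNIV. \<Sum>i\<in>UNIV. x $ i * M $ j $ i * y $ j)"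
    by (rule sum.cong[OF refl], rule sum.cong[OF refl], subst assms, rule refl)
  also have "\<dots> = (M *v x) \<bullet> y"
    by (simp add: inner_vec_def matrix_vector_mult_def sum_distrib_right sum_distrib_left mult_ac)
  finally show ?thesis .
qed

lemma eig_finite:
  fixes M :: "real^'n::finite^'n"
  assumes sym: "\<And>x y. x \<bullet> (M *v y) = (M *v x) \<bullet> y"
  shows "finite {e. \<exists>x. x \<noteq> 0 \<and> M *v x = e *\<^sub>R x}" (is "finite ?E")
proof (rule ccontr)
  assume "\<not> finite ?E"
  then obtain F where F: "finite F" "card F = Suc DIM(real^'n)" "F \<subseteq> ?E"
    using infinite_arbitrarily_large by blast
  define g where "g e = (SOME x. x \<noteq> 0 \<and> M *v x = e *\<^sub>R x)" for e
  have g: "g e \<noteq> 0 \<and> M *v g e = e *\<^sub>R g e" if "e \<in> F" for e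
  proof -
    from F(3) that obtain x where "x \<noteq> 0 \<and> M *v x = e *\<^sub>R x" by auto
    then show ?thesis unfolding g_def by (rule someI)
  qed
  have orth: "g e \<bullet> g f = 0" if "e \<in> F" "f \<in> F" "e \<noteq> f" for e f
  proof -
    have "e * (g e \<bullet> g f) = (M *v g e) \<bullet> g f" using g[OF that(1)] by simp
    also have "\<dots> = g e \<bullet> (M *v g f)" using sym by simp
    also have "\<dots> = f * (g e \<bullet> g f)" using g[OF that(2)] by simp
    finally show ?thesis using that(3) by simp
  qed
  have inj: "inj_on g F"
  proof
    fix e f assume "e \<in> F" "f \<in> F" "g e = g f"
    then show "e = f" using orth[of e f] g[of e] by force
  qed
  have "independent (g ` F)"
    apply (rule pairwise_orthogonal_independent)
    using orth g unfolding pairwise_def orthogonal_def by auto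
  then have "card (g ` F) \<le> DIM(real^'n)" using independent_bound by blast
  then show False using card_image[OF inj] F(2) by simp
qed

lemma eig_exists:
  fixes M :: "real^'n::finite^'n"
  assumes sym: "\<And>x y. x \<bullet> (M *v y) = (M *v x) \<bullet> y"
  shows "\<exists>e x. x \<noteq> 0 \<and> M *v x = e *\<^sub>R x"
proof -
  define q where "q x = x \<bullet> (M *v x)" for x :: "real^'n"
  have cont: "continuous_on (sphere 0 1) q"
    unfolding q_def by (intro continuous_intros linear_continuous_on matrix_vector_mul_linear bounded_linear_inner_right)
  obtain i :: 'n where True by simp
  have ne: "sphere (0::real^'n) 1 \<noteq> {}"
  proof -
    have "axis i (1::real) \<in> sphere 0 1" by simp
    then show ?thesis by blast
  qed
  obtain x0 where x0: "x0 \<in> sphere 0 1" "\<forall>y\<in>sphere 0 1. q x0 \<le> q y"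
    using continuous_attains_inf[OF compact_sphere ne cont] by blast
  define l where "l = q x0"
  define B where "B = M - l *\<^sub>R mat 1"
  have Bv: "B *v x = M *v x - l *\<^sub>R x" for x
    by (simp add: B_def matrix_vector_mult_diff_rdistrib scaleR_matrix_vector_assoc[symmetric])
  have psd: "x \<bullet> (B *v x) \<ge> 0" for x
  proof (cases "x = 0")
    case True then show ?thesis by simp
  next
    case False
    define y where "y = x /\<^sub>R norm x"
    have "y \<in> sphere 0 1" using False by (simp add: y_def)
    then have "l \<le> q y" using x0 l_def by blast
    also have "q y = q x / (norm x)\<^sup>2"
      by (simp add: q_def y_def matrix_vector_mult_scaleR power2_eq_square field_simps)
    finally have "l * (norm x)\<^sup>2 \<le> q x" using False by (simp add: field_simps)
    then show ?thesis using Bv by (simp add: q_def inner_diff_right power2_norm_eq_inner)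
  qed
  have B0: "x0 \<bullet> (B *v x0) = 0"
    using Bv x0(1) by (simp add: q_def l_def inner_diff_right power2_norm_eq_inner[symmetric])
  have symB: "x \<bullet> (B *v y) = (B *v x) \<bullet> y" for x y
    using sym[of x y] by (simp add: Bv inner_diff_right inner_diff_left inner_commute)
  define w where "w = B *v x0"
  have "\<forall>s::real. 0 \<le> (x0 - s *\<^sub>R w) \<bullet> (B *v (x0 - s *\<^sub>R w))" using psd by blast
  moreover have "(x0 - s *\<^sub>R w) \<bullet> (B *v (x0 - s *\<^sub>R w)) = - 2 * s * (w \<bullet> w) + s\<^sup>2 * (w \<bullet> (B *v w))" for s
    using B0 symB[of x0 w] unfolding w_def
    by (simp add: matrix_vector_mult_diff_distrib matrix_vector_mult_scaleR inner_diff_left inner_diff_right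
          inner_commute power2_eq_square algebra_simps)
  ultimately have H: "\<forall>s::real. 0 \<le> - 2 * s * (w \<bullet> w) + s\<^sup>2 * (w \<bullet> (B *v w))" by simp
  have "w \<bullet> w = 0"
  proof (rule ccontr)
    assume ne0: "w \<bullet> w \<noteq> 0"
    then have pos: "w \<bullet> w > 0" by simp
    define b where "b = w \<bullet> (B *v w)"
    have bnn: "b \<ge> 0" using psd b_def by simp
    define s where "s = (w \<bullet> w) / (b + 1)"
    have "0 \<le> - 2 * s * (w \<bullet> w) + s\<^sup>2 * b" using H b_def by simp
    moreover have "s > 0" using pos bnn s_def by simp
    moreover have "s * b < 2 * (w \<bullet> w)"
    proof -
      have "b/(b+1) < 1" using bnn by simp
      moreover have "s*b = (w \<bullet> w)*(b/(b+1))" by (simp add: s_def)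
      ultimately have "s * b < (w \<bullet> w)" using pos
        by (metis mult.right_neutral mult_strict_left_mono)
      then show ?thesis using pos by linarith
    qed
    ultimately have "0 \<le> s * (- 2 * (w \<bullet> w) + s * b)" "s * (- 2 * (w \<bullet> w) + s * b) < 0"
      by (auto simp: power2_eq_square algebra_simps mult_pos_neg)
    then show False by simp
  qed
  then have "M *v x0 = l *\<^sub>R x0" using Bv unfolding w_def by simp
  moreover have "x0 \<noteq> 0" using x0(1) by auto
  ultimately show ?thesis by blast
qed

lemma row_bound:
  fixes c :: "real^'n::finite" and w :: "'n \<Rightarrow> real" and x :: "real^'n"
  assumes wpos: "\<And>j. w j > 0"
    and close: "\<And>j. \<bar>c $ j * w j - (if j = i then 1 else 0)\<bar> \<le> t"
  defines "z \<equiv> (\<lambda>j. x $ j / w j)"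
  shows "(c \<bullet> x)\<^sup>2 \<ge> (z i)\<^sup>2 - 2 * t * \<bar>z i\<bar> * (\<Sum>j\<in>UNIV. \<bar>z j\<bar>)"
proof -
  define e where "e j = c $ j * w j - (if j = i then 1 else 0)" for j
  have "c \<bullet> x = (\<Sum>j\<in>UNIV. (c $ j * w j) * z j)"
    unfolding inner_vec_def z_def using wpos by (intro sum.cong) (auto simp: less_imp_neq[symmetric])
  also have "\<dots> = (\<Sum>j\<in>UNIV. (if j = i then 1 else 0) * z j) + (\<Sum>j\<in>UNIV. e j * z j)"
    by (simp add: e_def sum.distrib[symmetric] algebra_simps)
  also have "(\<Sum>j\<in>UNIV. (if j = i then 1 else 0) * z j) = z i"
    by (simp add: if_distrib[of "\<lambda>a. a * _"] cong: if_cong)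
  finally have cx: "c \<bullet> x = z i + (\<Sum>j\<in>UNIV. e j * z j)" .
  define b where "b = (\<Sum>j\<in>UNIV. e j * z j)"
  have "\<bar>b\<bar> \<le> (\<Sum>j\<in>UNIV. \<bar>e j * z j\<bar>)" unfolding b_def by (rule sum_abs)
  also have "\<dots> \<le> (\<Sum>j\<in>UNIV. t * \<bar>z j\<bar>)"
  proof (intro sum_mono)
    fix j
    have "\<bar>e j\<bar> \<le> t" unfolding e_def by (rule close)
    then show "\<bar>e j * z j\<bar> \<le> t * \<bar>z j\<bar>" by (simp add: abs_mult mult_right_mono)
  qed
  finally have bb: "\<bar>b\<bar> \<le> t * (\<Sum>j\<in>UNIV. \<bar>z j\<bar>)" by (simp add: sum_distrib_left)
  have "\<bar>z i\<bar> * \<bar>b\<bar> \<le> \<bar>z i\<bar> * (t * (\<Sum>j\<in>UNIV. \<bar>z j\<bar>))"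
    using bb by (intro mult_left_mono) auto
  moreover have "(z i + b)\<^sup>2 \<ge> (z i)\<^sup>2 - 2 * (\<bar>z i\<bar> * \<bar>b\<bar>)"
  proof -
    have "z i * b \<ge> - (\<bar>z i\<bar> * \<bar>b\<bar>)" by (metis abs_ge_minus_self abs_mult minus_le_iff)
    then show ?thesis by (simp add: power2_eq_square algebra_simps)
  qed
  ultimately show ?thesis using cx b_def by (simp add: algebra_simps)
qed

lemma total_bound:
  fixes c :: "nat \<Rightarrow> real^'n::finite" and w :: "'n \<Rightarrow> real" and x :: "real^'n"
    and S :: "'n \<Rightarrow> nat set" and m :: nat and t \<delta> :: real
  assumes wpos: "\<And>j. w j > 0"
    and Ssub: "\<And>i. S i \<subseteq> {1..m}"
    and disj: "\<And>i j. i \<noteq> j \<Longrightarrow> S i \<inter> S j = {}"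
    and card: "\<And>i. real (card (S i)) \<ge> real m * (5/2 * real CARD('n) * t + \<delta>)"
    and close: "\<And>i k j. k \<in> S i \<Longrightarrow> \<bar>c k $ j * w j - (if j = i then 1 else 0)\<bar> \<le> t"
    and t0: "t \<ge> 0" and d0: "\<delta> > 0"
  shows "(\<Sum>k\<in>{1..m}. (c k \<bullet> x)\<^sup>2) \<ge> real m * \<delta> * (\<Sum>j\<in>UNIV. (x $ j / w j)\<^sup>2)"
proof (cases "m = 0")
  case True then show ?thesis by simp
next
  case False
  define n where "n = real CARD('n)"
  define \<alpha> where "\<alpha> = 5/2 * n * t + \<delta>"
  define z where "z j = x $ j / w j" for j
  define L where "L = (\<Sum>j\<in>UNIV. \<bar>z j\<bar>)"
  define g where "g i = (z i)\<^sup>2 - 2 * t * \<bar>z i\<bar> * L" for i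
  define f where "f k = (c k \<bullet> x)\<^sup>2" for k
  have n1: "n \<ge> 1" unfolding n_def by simp
  have fin: "finite (S i)" for i using Ssub finite_subset by blast
  have "(\<Sum>i\<in>UNIV. card (S i)) = card (\<Union>i. S i)"
    by (rule card_UN_disjoint[symmetric]) (auto simp: fin disj)
  also have "\<dots> \<le> card {1..m}" by (rule card_mono) (auto dest: Ssub[THEN subsetD])
  finally have "real (\<Sum>i\<in>UNIV. card (S i)) \<le> real m" by (simp only: of_nat_le_iff card_atLeastAtMost)
  moreover have "real (\<Sum>i\<in>UNIV. card (S i)) \<ge> n * (real m * \<alpha>)"
    using sum_mono[of UNIV "\<lambda>i. real m * \<alpha>" "\<lambda>i. real (card (S i))"] card
    by (simp add: n_def \<alpha>_def)
  ultimately have "n * \<alpha> * real m \<le> 1 * real m" by (simp add: mult_ac)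
  then have na: "n * \<alpha> \<le> 1" using False by simp
  have a0: "\<alpha> \<ge> 0" unfolding \<alpha>_def using t0 d0 n1 by simp
  have a1: "\<alpha> \<le> 1" proof -
    have "1 * \<alpha> \<le> n * \<alpha>" by (rule mult_right_mono[OF n1 a0])
    then show ?thesis using na by linarith
  qed
  have keyalg: "\<alpha> * (1 - 2 * t * n) - \<delta> = n * t * (5/2 - 2 * \<alpha>)"
    unfolding \<alpha>_def by (simp add: algebra_simps divide_simps)
  have key: "\<alpha> * (1 - 2 * t * n) \<ge> \<delta>"
  proof -
    have "n * t * (5/2 - 2 * \<alpha>) \<ge> 0" using t0 n1 a1 by (intro mult_nonneg_nonneg) auto
    then show ?thesis using keyalg by linarith
  qed
  have fg: "f k \<ge> g i" if "k \<in> S i" for i k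
    unfolding f_def g_def L_def z_def
    by (rule row_bound[OF wpos]) (rule close[OF that])
  have "(\<Sum>k\<in>{1..m}. f k) \<ge> (\<Sum>k\<in>(\<Union>i. S i). f k)"
    by (rule sum_mono2) (auto simp: f_def dest: Ssub[THEN subsetD])
  also have "(\<Sum>k\<in>(\<Union>i. S i). f k) = (\<Sum>i\<in>UNIV. \<Sum>k\<in>S i. f k)"
    by (rule sum.UNION_disjoint) (auto simp: fin disj)
  finally have s1: "(\<Sum>k\<in>{1..m}. f k) \<ge> (\<Sum>i\<in>UNIV. \<Sum>k\<in>S i. f k)" .
  have s2: "(\<Sum>k\<in>S i. f k) \<ge> real m * \<alpha> * g i" for i
  proof -
    have "(\<Sum>k\<in>S i. f k) \<ge> (\<Sum>k\<in>S i. max 0 (g i))"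
      using fg by (intro sum_mono) (auto simp: f_def)
    also have "(\<Sum>k\<in>S i. max 0 (g i)) = real (card (S i)) * max 0 (g i)" by simp
    finally have "(\<Sum>k\<in>S i. f k) \<ge> real (card (S i)) * max 0 (g i)" .
    moreover have "real (card (S i)) * max 0 (g i) \<ge> real m * \<alpha> * max 0 (g i)"
      using card[of i] by (intro mult_right_mono) (auto simp: \<alpha>_def n_def)
    moreover have "real m * \<alpha> * max 0 (g i) \<ge> real m * \<alpha> * g i"
      using a0 by (intro mult_left_mono) auto
    ultimately show ?thesis by linarith
  qed
  have s3: "(\<Sum>i\<in>UNIV. g i) = (\<Sum>j\<in>UNIV. (z j)\<^sup>2) - 2 * t * L * L"
  proof -
    have "(\<Sum>i\<in>UNIV. g i) = (\<Sum>j\<in>UNIV. (z j)\<^sup>2) - (\<Sum>i\<in>UNIV. (2 * t * L) * \<bar>z i\<bar>)"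
      unfolding g_def by (simp add: sum_subtractf mult_ac)
    also have "(\<Sum>i\<in>UNIV. (2 * t * L) * \<bar>z i\<bar>) = 2 * t * L * L"
      by (simp add: sum_distrib_left[symmetric] L_def)
    finally show ?thesis .
  qed
  have s4: "L * L \<le> n * (\<Sum>j\<in>UNIV. (z j)\<^sup>2)"
    using sum_squared_le_sum_of_squares[of "\<lambda>j. \<bar>z j\<bar>" UNIV]
    by (simp add: L_def n_def power2_eq_square mult_ac)
  define Z where "Z = (\<Sum>j\<in>UNIV. (z j)\<^sup>2)"
  have Z0: "Z \<ge> 0" unfolding Z_def by (simp add: sum_nonneg)
  have "(\<Sum>k\<in>{1..m}. f k) \<ge> real m * \<alpha> * (Z - 2 * t * L * L)"
    using s1 sum_mono[of UNIV "\<lambda>i. real m * \<alpha> * g i", OF s2] s3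
    by (simp add: sum_distrib_left[symmetric] Z_def)
  moreover have "real m * \<alpha> * (Z - 2 * t * L * L) \<ge> real m * \<alpha> * ((1 - 2 * t * n) * Z)"
  proof -
    have "2 * t * (L * L) \<le> 2 * t * (n * Z)" using s4 t0 unfolding Z_def by (intro mult_left_mono) auto
    then show ?thesis using a0 by (intro mult_left_mono) (auto simp: algebra_simps)
  qed
  moreover have "real m * \<alpha> * ((1 - 2 * t * n) * Z) \<ge> real m * \<delta> * Z"
  proof -
    have "real m * \<delta> \<le> real m * (\<alpha> * (1 - 2 * t * n))" using key by (intro mult_left_mono) auto
    then have "real m * \<delta> * Z \<le> real m * (\<alpha> * (1 - 2 * t * n)) * Z" using Z0 by (intro mult_right_mono) auto
    then show ?thesis by (simp add: mult_ac)
  qed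
  ultimately show ?thesis unfolding f_def Z_def z_def by linarith
qed

lemma C_set_bound:
  assumes "x \<in> C_set \<Delta> v t i"
  shows "\<bar>(fan_coords \<Delta> v x) $ j * norm (v j) - (if j = i then 1 else 0)\<bar> \<le> t"
proof -
  have "\<bar>(fan_coords \<Delta> v x) $ j * norm (v j) - (if j = i then 1 else 0)\<bar>
     \<le> (MAX l\<in>UNIV. \<bar>(fan_coords \<Delta> v x) $ l * norm (v l) - (if l = i then 1 else 0)\<bar>)"
    by (rule Max_ge) auto
  then show ?thesis using assms unfolding C_set_def by simp
qed

theorem lemma4p8:
  fixes \<Delta> :: "(real^'d) set set"
    and v :: "'n::finite \<Rightarrow> real^'d"
    and u :: "nat \<Rightarrow> real^'d"
    and t \<delta> :: real and N :: nat
  assumes "simplicial_fan \<Delta>" and "polytopal_fan \<Delta>"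
    and "ray_generators \<Delta> v"
    and "\<And>k. k \<ge> 1 \<Longrightarrow> norm (u k) = 1"
    and "0 \<le> t" and "t < 1/2" and "\<delta> > 0"
    and "\<And>m i. m \<ge> N \<Longrightarrow>
           real (card ({u k | k. 1 \<le> k \<and> k \<le> m} \<inter> C_set \<Delta> v t i))
             \<ge> real m * (5/2 * real CARD('n) * t + \<delta>)"
  shows "\<And>m. m \<ge> N \<Longrightarrow>
           lambda_min (AtA_U \<Delta> v u m) \<ge> real m * \<delta> / (MAX i\<in>UNIV. (norm (v i))\<^sup>2)"
proof -
  fix m assume mN: "m \<ge> N"
  define c where "c k = fan_coords \<Delta> v (u k)" for k
  define w where "w j = norm (v j)" for j
  define S where "S i = {k\<in>{1..m}. u k \<in> C_set \<Delta> v t i}" for i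
  define M where "M = AtA_U \<Delta> v u m"
  define W where "W = (MAX i\<in>UNIV. (norm (v i))\<^sup>2)"
  have vnz: "v j \<noteq> 0" for j using assms(3) unfolding ray_generators_def by blast
  have wpos: "w j > 0" for j using vnz by (simp add: w_def)
  have Wge: "(w j)\<^sup>2 \<le> W" for j unfolding W_def w_def by (rule Max_ge) auto
  have Wpos: "W > 0" using Wge[of undefined] wpos[of undefined]
    by (smt (verit) zero_less_power)
  have close: "\<bar>c k $ j * w j - (if j = i then 1 else 0)\<bar> \<le> t" if "k \<in> S i" for i k j
    using that C_set_bound unfolding S_def c_def w_def by blast
  have Ssub: "S i \<subseteq> {1..m}" for i unfolding S_def by auto
  have disj: "S i \<inter> S j = {}" if "i \<noteq> j" for i j
  proof (rule ccontr)
    assume "S i \<inter> S j \<noteq> {}"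
    then obtain k where "k \<in> S i" "k \<in> S j" by blast
    then have "\<bar>c k $ i * w i - 1\<bar> \<le> t" "\<bar>c k $ i * w i\<bar> \<le> t"
      using close[of k i i] close[of k j i] that by auto
    then show False using assms(6) by linarith
  qed
  have card: "real (card (S i)) \<ge> real m * (5/2 * real CARD('n) * t + \<delta>)" for i
  proof -
    have eq: "u ` S i = {u k | k. 1 \<le> k \<and> k \<le> m} \<inter> C_set \<Delta> v t i"
      unfolding S_def by auto
    have "card (u ` S i) \<le> card (S i)"
      by (rule card_image_le) (use Ssub finite_subset in blast)
    then have "real (card ({u k | k. 1 \<le> k \<and> k \<le> m} \<inter> C_set \<Delta> v t i)) \<le> real (card (S i))"
      unfolding eq by simp
    then show ?thesis using assms(8)[OF mN, of i] by linarith
  qed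
  have Mdef: "M = (\<chi> i j. \<Sum>k\<in>{1..m}. c k $ i * c k $ j)"
    unfolding M_def AtA_U_def c_def by simp
  have symM: "x \<bullet> (M *v y) = (M *v x) \<bullet> y" for x y
    by (rule sym_mat) (simp add: Mdef mult.commute)
  define E where "E = {e. \<exists>x. x \<noteq> 0 \<and> M *v x = e *\<^sub>R x}"
  have finE: "finite E" unfolding E_def by (rule eig_finite[OF symM])
  have neE: "E \<noteq> {}" unfolding E_def using eig_exists[OF symM] by blast
  have bnd: "real m * \<delta> / W \<le> e" if "e \<in> E" for e
  proof -
    obtain x where x: "x \<noteq> 0" "M *v x = e *\<^sub>R x" using \<open>e \<in> E\<close> unfolding E_def by blast
    have "e * (norm x)\<^sup>2 = x \<bullet> (M *v x)" using x(2) by (simp add: power2_norm_eq_inner)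
    also have "\<dots> = (\<Sum>k\<in>{1..m}. (c k \<bullet> x)\<^sup>2)" unfolding Mdef by (rule quad_form) simp
    also have "\<dots> \<ge> real m * \<delta> * (\<Sum>j\<in>UNIV. (x $ j / w j)\<^sup>2)"
      by (rule total_bound[OF wpos Ssub disj card close assms(5) assms(7)])
    finally have A: "e * (norm x)\<^sup>2 \<ge> real m * \<delta> * (\<Sum>j\<in>UNIV. (x $ j / w j)\<^sup>2)" .
    have "(norm x)\<^sup>2 = (\<Sum>j\<in>UNIV. (x $ j)\<^sup>2)"
      unfolding power2_norm_eq_inner inner_vec_def by (simp add: power2_eq_square)
    also have "\<dots> \<le> (\<Sum>j\<in>UNIV. W * (x $ j / w j)\<^sup>2)"
    proof (intro sum_mono)
      fix j
      have "(x $ j)\<^sup>2 = (w j)\<^sup>2 * (x $ j / w j)\<^sup>2" using wpos[of j] by (simp add: field_simps)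
      also have "\<dots> \<le> W * (x $ j / w j)\<^sup>2" using Wge[of j] by (intro mult_right_mono) auto
      finally show "(x $ j)\<^sup>2 \<le> W * (x $ j / w j)\<^sup>2" .
    qed
    also have "\<dots> = W * (\<Sum>j\<in>UNIV. (x $ j / w j)\<^sup>2)" by (simp add: sum_distrib_left)
    finally have B: "(norm x)\<^sup>2 / W \<le> (\<Sum>j\<in>UNIV. (x $ j / w j)\<^sup>2)"
      using Wpos by (simp add: divide_le_eq mult.commute)
    have md: "real m * \<delta> \<ge> 0" using assms(7) by simp
    have "real m * \<delta> * ((norm x)\<^sup>2 / W) \<le> e * (norm x)\<^sup>2"
      using A mult_left_mono[OF B md] by linarith
    then have "(real m * \<delta> / W) * (norm x)\<^sup>2 \<le> e * (norm x)\<^sup>2" by (simp add: field_simps)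
    moreover have "(norm x)\<^sup>2 > 0" using x(1) by simp
    ultimately show ?thesis by (rule mult_right_le_imp_le)
  qed
  have "lambda_min M = Min E" unfolding lambda_min_def E_def by simp
  then show "lambda_min (AtA_U \<Delta> v u m) \<ge> real m * \<delta> / (MAX i\<in>UNIV. (norm (v i))\<^sup>2)"
    using bnd finE neE unfolding M_def W_def by (simp add: Min_ge_iff)
qed

end
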